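(* On the two coordinate axes consider the inner product $$\langle f,g\rangle=\int_{\mathbb R}f(x,0)g(x,0)e^{-x^2}dx+\int_{\mathbb R}f(0,y)g(0,y)e^{-y^2}dy .$$ Define $$Y_{n,1}(x,y)=H_n(x)+H_n(y)-H_n(0)\ (n\ge0),$$ $$Y_{2n,2}(x,y)=x^2L_{n-1}^{\frac32}(x^2)-y^2L_{n-1}^{\frac32}(y^2)\ (n\ge1),\qquad Y_{2n+1,2}(x,y)=x\,L_n^{\frac12}(x^2)-y\,L_n^{\frac12}(y^2)\ (n\ge0).$$ Then for every $m\ge1$, $Y_{m,1}$ and $Y_{m,2}$ are polynomials of degree $m$ which are orthogonal (with respect to $\langle\cdot,\cdot\rangle$) to all polynomials of degree less than $m$ and to each other; that is, they are mutually orthogonal elements of $\mathcal H_m$.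
   Context: $H_n$ denotes the Hermite polynomial of degree $n$ (orthogonal with respect to $e^{-x^2}$ on $\mathbb R$), and $L_n^{\alpha}$ the Laguerre polynomial of degree $n$ (orthogonal with respect to $t^{\alpha}e^{-t}$ on $[0,\infty)$). $\mathcal H_m$ is the space of polynomials of degree $m$ in two variables orthogonal to all polynomials of lower degree, modulo the ideal $\langle xy\rangle$. *)

theory Defs
  imports "HOL-Analysis.Analysis"
begin

fun hermite :: "nat \<Rightarrow> real \<Rightarrow> real" where
  "hermite 0 x = 1"
| "hermite (Suc 0) x = 2 * x"
| "hermite (Suc (Suc n)) x = 2 * x * hermite (Suc n) x - 2 * real (Suc n) * hermite n x"

definition laguerre :: "nat \<Rightarrow> real \<Rightarrow> real \<Rightarrow> real" where
  "laguerre n a t = (\<Sum>k\<le>n. (-1)^k * ((real n + a) gchoose (n - k)) * t^k / fact k)"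

definition axes_ip :: "(real \<Rightarrow> real \<Rightarrow> real) \<Rightarrow> (real \<Rightarrow> real \<Rightarrow> real) \<Rightarrow> real" where
  "axes_ip f g = (LINT x|lborel. f x 0 * g x 0 * exp (- (x^2)))
               + (LINT y|lborel. f 0 y * g 0 y * exp (- (y^2)))"

definition Y1 :: "nat \<Rightarrow> real \<Rightarrow> real \<Rightarrow> real" where
  "Y1 n x y = hermite n x + hermite n y - hermite n 0"

definition Y2 :: "nat \<Rightarrow> real \<Rightarrow> real \<Rightarrow> real" where
  "Y2 m x y = (if even m
     then x^2 * laguerre (m div 2 - 1) (3/2) (x^2) - y^2 * laguerre (m div 2 - 1) (3/2) (y^2)
     else x * laguerre (m div 2) (1/2) (x^2) - y * laguerre (m div 2) (1/2) (y^2))"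

definition bipoly_of_degree :: "nat \<Rightarrow> (real \<Rightarrow> real \<Rightarrow> real) \<Rightarrow> bool" where
  "bipoly_of_degree m f \<longleftrightarrow> (\<exists>c :: nat \<Rightarrow> nat \<Rightarrow> real.
      (\<forall>x y. f x y = (\<Sum>(i,j)\<in>{(i,j). i + j \<le> m}. c i j * x^i * y^j))
      \<and> (\<exists>i j. i + j = m \<and> c i j \<noteq> 0))"

end

theory Submission
  imports Defs "HOL-Probability.Distributions" "HOL-Computational_Algebra.Polynomial"
begin


definition M :: "nat \<Rightarrow> real" where "M n = (LINT x|lborel. exp (- (x^2)) * x^n)"

lemma mom_even: "has_bochner_integral lborel (\<lambda>x::real. exp (- (x^2)) * x^(2*k))
      (sqrt pi * (fact (2 * k) / (2 ^ (2 * k) * fact k)))"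
  using has_bochner_integral_even_function[OF gaussian_moment_even_pos[where k=k]] by simp

lemma mom_odd: "has_bochner_integral lborel (\<lambda>x::real. exp (- (x^2)) * x^(2*k+1)) 0"
  using gaussian_moment_odd_pos by (rule has_bochner_integral_odd_function) simp

lemma mom_int: "integrable lborel (\<lambda>x::real. exp (- (x^2)) * x^n)"
proof (cases "even n")
  case True then obtain k where k: "n = 2*k" by auto
  show ?thesis unfolding k using mom_even has_bochner_integral_iff by blast
next
  case False then obtain k where k: "n = 2*k+1" using oddE by blast
  show ?thesis unfolding k using mom_odd has_bochner_integral_iff by blast
qed

lemma M_even: "M (2*k) = sqrt pi * (fact (2 * k) / (2 ^ (2 * k) * fact k))"
  unfolding M_def by (rule has_bochner_integral_integral_eq[OF mom_even])

lemma M_odd: assumes "odd n" shows "M n = 0"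
proof -
  obtain k where k: "n = 2*k+1" using assms oddE by blast
  show ?thesis unfolding M_def k by (rule has_bochner_integral_integral_eq[OF mom_odd])
qed

lemma M_rec: "M (n+2) = (real n + 1) / 2 * M n"
proof (cases "even n")
  case True then obtain k where k: "n = 2*k" by auto
  have e: "(2*k+2) = Suc (Suc (2*k))" by simp
  have f1: "fact (2*k+2) = (2*real k+2)*(2*real k+1)*(fact (2*k)::real)"
    unfolding e by (simp only: fact_Suc) (simp add: algebra_simps)
  have f2: "fact (k+1) = (real k+1)*(fact k::real)" by (simp add: fact_Suc algebra_simps)
  have f3: "(2::real)^(2*k+2) = 4 * 2^(2*k)" by (simp add: power_add)
  have r: "(2*real k+2)*(2*real k+1)/(4*(real k+1)) = (2*real k+1)/2" by (simp add: field_simps)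
  have "M (n+2) = M (2*(k+1))" using k by (simp add: algebra_simps)
  also have "\<dots> = sqrt pi * (fact (2 * k + 2) / (2 ^ (2 * k + 2) * fact (k+1)))"
    by (simp only: M_even) (simp add: algebra_simps)
  also have "\<dots> = sqrt pi * (((2*real k+2)*(2*real k+1)/(4*(real k+1))) * (fact (2 * k) / (2 ^ (2 * k) * fact k)))"
    unfolding f1 f2 f3 by (simp add: mult_ac)
  also have "\<dots> = (real n + 1) / 2 * M n"
    unfolding r k M_even by (simp add: mult_ac)
  finally show ?thesis .
next
  case False then show ?thesis by (simp add: M_odd)
qed



definition Phi :: "real poly \<Rightarrow> real" where
  "Phi p = (LINT x|lborel. poly p x * exp (- (x^2)))"

lemma poly_sum_le: "degree (p::real poly) \<le> N \<Longrightarrow> poly p x = (\<Sum>i\<le>N. coeff p i * x^i)"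
  unfolding poly_altdef
  by (rule sum.mono_neutral_left) (auto simp: coeff_eq_0)

lemma poly_exp_sum: assumes d: "degree (p::real poly) \<le> N" shows
   "poly p x * exp (- (x^2)) = (\<Sum>i\<le>N. coeff p i * (exp (- (x^2)) * x^i))"
  by (simp add: poly_sum_le[OF d] sum_distrib_left sum_distrib_right mult_ac)

lemma int_poly: "integrable lborel (\<lambda>x. poly (p::real poly) x * exp (- (x^2)))"
proof -
  have "integrable lborel (\<lambda>x. \<Sum>i\<le>degree p. coeff p i * (exp (- (x^2)) * x^i))"
    using mom_int by (auto intro!: Bochner_Integration.integrable_sum integrable_mult_right)
  then show ?thesis by (subst poly_exp_sum[OF order.refl])
qed

lemma Phi_coeff: "degree p \<le> N \<Longrightarrow> Phi p = (\<Sum>i\<le>N. coeff p i * M i)"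
proof -
  assume d: "degree p \<le> N"
  have "Phi p = (LINT x|lborel. (\<Sum>i\<le>N. coeff p i * (exp (- (x^2)) * x^i)))"
    unfolding Phi_def by (simp only: poly_exp_sum[OF d])
  also have "\<dots> = (\<Sum>i\<le>N. (LINT x|lborel. coeff p i * (exp (- (x^2)) * x^i)))"
    by (rule Bochner_Integration.integral_sum) (use mom_int in auto)
  also have "\<dots> = (\<Sum>i\<le>N. coeff p i * M i)"
    unfolding M_def by simp
  finally show ?thesis .
qed

lemma Phi_add: "Phi (p + q) = Phi p + Phi q"
proof -
  have "Phi (p + q) = (LINT x|lborel. poly p x * exp (- (x^2)) + poly q x * exp (- (x^2)))"
    unfolding Phi_def by (simp add: distrib_right)
  also have "\<dots> = Phi p + Phi q" unfolding Phi_def by (rule Bochner_Integration.integral_add[OF int_poly int_poly])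
  finally show ?thesis .
qed

lemma Phi_diff: "Phi (p - q) = Phi p - Phi q"
proof -
  have "Phi (p - q) = (LINT x|lborel. poly p x * exp (- (x^2)) - poly q x * exp (- (x^2)))"
    unfolding Phi_def by (simp add: left_diff_distrib)
  also have "\<dots> = Phi p - Phi q" unfolding Phi_def by (rule Bochner_Integration.integral_diff[OF int_poly int_poly])
  finally show ?thesis .
qed

lemma Phi_smult: "Phi (smult c p) = c * Phi p"
  unfolding Phi_def by (simp add: mult.assoc)

lemma Phi_0: "Phi 0 = 0" unfolding Phi_def by simp

lemma Phi_pderiv: "Phi (pderiv p) = 2 * Phi (pCons 0 p)"
proof -
  let ?N = "degree p"
  let ?c = "coeff p"
  have d1: "degree (pderiv p) \<le> ?N" by (simp add: degree_pderiv)
  have d2: "degree (pCons 0 p) \<le> Suc ?N" by (rule degree_pCons_le)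
  have "Phi (pderiv p) = (\<Sum>i\<le>?N. of_nat (Suc i) * ?c (Suc i) * M i)"
    by (simp add: Phi_coeff[OF d1] coeff_pderiv)
  also have "\<dots> = (\<Sum>i\<le>?N. 2 * (?c (Suc i) * M (Suc i + 1)))"
  proof (rule sum.cong)
    fix i show "of_nat (Suc i) * ?c (Suc i) * M i = 2 * (?c (Suc i) * M (Suc i + 1))"
    proof -
      have h: "M (Suc (Suc i)) = (real i + 1)/2 * M i" using M_rec[of i] by simp
      show ?thesis by (simp add: h field_simps)
    qed
  qed simp
  also have "\<dots> = 2 * (\<Sum>i\<le>?N. ?c (Suc i) * M (Suc (Suc i)))"
    by (simp add: sum_distrib_left)
  also have "(\<Sum>i\<le>?N. ?c (Suc i) * M (Suc (Suc i))) = (\<Sum>i\<le>Suc ?N. ?c i * M (Suc i))"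
    by (subst sum.atMost_Suc_shift) (simp add: M_odd)
  also have "\<dots> = (\<Sum>i\<le>?N. ?c i * M (Suc i))"
    by (simp add: coeff_eq_0)
  also have "\<dots> = Phi (pCons 0 p)"
    by (simp only: Phi_coeff[OF d2] sum.atMost_Suc_shift coeff_pCons_0 coeff_pCons_Suc)
  finally show ?thesis .
qed



fun Hp :: "nat \<Rightarrow> real poly" where
  "Hp 0 = 1"
| "Hp (Suc 0) = [:0, 2:]"
| "Hp (Suc (Suc n)) = smult 2 (pCons 0 (Hp (Suc n))) - smult (2 * real (Suc n)) (Hp n)"

lemma poly_Hp: "poly (Hp n) x = hermite n x"
  by (induction n rule: Hp.induct) (simp_all add: algebra_simps)

lemma Hp_deriv: "pderiv (Hp (Suc n)) = smult (2 * real (Suc n)) (Hp n)"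
proof (induction n rule: Hp.induct)
  case 1
  then show ?case by (simp add: pderiv_pCons)
next
  case 2
  then show ?case by (simp add: pderiv_pCons pderiv_diff pderiv_smult)
next
  case (3 n)
  let ?H = "\<lambda>k. poly (Hp k)"
  have e1: "pderiv (Hp (Suc n)) = smult (2 * real (Suc n)) (Hp n)" by fact
  have e2: "pderiv (Hp (Suc (Suc n))) = smult (2 * real (Suc (Suc n))) (Hp (Suc n))" by fact
  have "pderiv (Hp (Suc (Suc (Suc n)))) =
     smult 2 (Hp (Suc (Suc n))) + smult 2 (pCons 0 (pderiv (Hp (Suc (Suc n)))))
     - smult (2 * real (Suc (Suc n))) (pderiv (Hp (Suc n)))"
    by (simp only: Hp.simps pderiv_diff pderiv_smult pderiv_pCons) (simp add: smult_add_right)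
  also have "\<dots> = smult (2 * real (Suc (Suc (Suc n)))) (Hp (Suc (Suc n)))"
    unfolding e1 e2
    by (simp add: poly_eq_poly_eq_iff[symmetric] fun_eq_iff algebra_simps)
  finally show ?case .
qed


lemma Hp_rec: "Hp (Suc n) = smult 2 (pCons 0 (Hp n)) - pderiv (Hp n)"
proof (cases n)
  case 0 then show ?thesis by (simp add: pderiv_pCons)
next
  case (Suc k) then show ?thesis by (simp add: Hp_deriv)
qed

lemma Phi_Hp_step: "Phi (Hp (Suc n) * q) = Phi (Hp n * pderiv q)"
proof -
  have a: "Phi (pderiv (Hp n * q)) = 2 * Phi (pCons 0 (Hp n * q))" by (rule Phi_pderiv)
  have b: "pderiv (Hp n * q) = Hp n * pderiv q + pderiv (Hp n) * q"
    by (simp add: pderiv_mult algebra_simps)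
  have c: "Hp (Suc n) * q = smult 2 (pCons 0 (Hp n * q)) - pderiv (Hp n) * q"
    by (simp add: Hp_rec algebra_simps mult_pCons_left)
  show ?thesis using a unfolding b c Phi_add Phi_diff Phi_smult by simp
qed

lemma Phi_Hp: "Phi (Hp n * q) = Phi ((pderiv ^^ n) q)"
proof (induction n arbitrary: q)
  case 0 then show ?case by simp
next
  case (Suc n) then show ?case by (simp add: Phi_Hp_step funpow_Suc_right del: funpow.simps)
qed

lemma pderiv_pow_0: "(pderiv ^^ n) (0::real poly) = 0"
  by (induction n) simp_all

lemma pderiv_pow_zero: "degree (q::real poly) < n \<Longrightarrow> (pderiv ^^ n) q = 0"
proof (induction n arbitrary: q)
  case 0 then show ?case by simp
next
  case (Suc n)
  show ?case
  proof (cases "degree q = 0")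
    case True
    then have "pderiv q = 0" by (simp add: pderiv_eq_0_iff)
    then show ?thesis by (simp add: funpow_Suc_right pderiv_pow_0 del: funpow.simps)
  next
    case False
    then have "degree (pderiv q) < n" using Suc.prems by (simp add: degree_pderiv)
    then show ?thesis using Suc.IH by (simp add: funpow_Suc_right del: funpow.simps)
  qed
qed

lemma hermite_int: "integrable lborel (\<lambda>x. hermite m x * x^i * exp (- (x^2)))"
proof -
  have e: "(\<lambda>x. hermite m x * x^i * exp (- (x^2))) = (\<lambda>x. poly (Hp m * monom 1 i) x * exp (- (x^2)))"
    by (simp add: poly_Hp poly_monom)
  show ?thesis unfolding e by (rule int_poly)
qed

lemma hermite_orth: "i < m \<Longrightarrow> (LINT x|lborel. hermite m x * x^i * exp (- (x^2))) = 0"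
proof -
  assume "i < m"
  have "(LINT x|lborel. hermite m x * x^i * exp (- (x^2))) = Phi (Hp m * monom 1 i)"
    unfolding Phi_def by (simp add: poly_Hp poly_monom)
  also have "\<dots> = 0" using \<open>i < m\<close> by (simp add: Phi_Hp pderiv_pow_zero degree_monom_eq Phi_0)
  finally show ?thesis .
qed



lemma pascal_alt:
  fixes f :: "nat \<Rightarrow> real"
  shows "(\<Sum>k\<le>Suc N. (-1)^k * real (Suc N choose k) * f k)
       = (\<Sum>k\<le>N. (-1)^k * real (N choose k) * (f k - f (Suc k)))"
proof -
  have A: "(\<Sum>k\<le>Suc N. (-1)^k * real (Suc N choose k) * f k)
     = f 0 - (\<Sum>k\<le>N. (-1)^k * real (N choose k) * f (Suc k))
           - (\<Sum>k\<le>N. (-1)^k * real (N choose Suc k) * f (Suc k))"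
  proof -
    have "(\<Sum>k\<le>Suc N. (-1)^k * real (Suc N choose k) * f k)
       = f 0 + (\<Sum>k\<le>N. (-1)^(Suc k) * real (Suc N choose Suc k) * f (Suc k))"
      by (simp only: sum.atMost_Suc_shift) simp
    also have "(\<Sum>k\<le>N. (-1)^(Suc k) * real (Suc N choose Suc k) * f (Suc k))
       = (\<Sum>k\<le>N. - ((-1)^k * real (N choose k) * f (Suc k)) - (-1)^k * real (N choose Suc k) * f (Suc k))"
      by (rule sum.cong) (simp_all add: algebra_simps)
    also have "\<dots> = - (\<Sum>k\<le>N. (-1)^k * real (N choose k) * f (Suc k)) - (\<Sum>k\<le>N. (-1)^k * real (N choose Suc k) * f (Suc k))"
      by (simp add: sum_subtractf sum_negf)
    finally show ?thesis by simp
  qed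
  have B: "(\<Sum>k\<le>N. (-1)^k * real (N choose k) * f k)
     = f 0 - (\<Sum>k\<le>N. (-1)^k * real (N choose Suc k) * f (Suc k))"
  proof -
    have "(\<Sum>k\<le>N. (-1)^k * real (N choose k) * f k) = (\<Sum>k\<le>Suc N. (-1)^k * real (N choose k) * f k)"
      by simp
    also have "\<dots> = f 0 - (\<Sum>k\<le>N. (-1)^k * real (N choose Suc k) * f (Suc k))"
      by (simp only: sum.atMost_Suc_shift) (simp add: sum_negf)
    finally show ?thesis .
  qed
  show ?thesis using A B by (simp add: algebra_simps sum_subtractf)
qed

lemma alt_poch: "s < N \<Longrightarrow> (\<Sum>k\<le>N. (-1)^k * real (N choose k) * pochhammer (real k + c) s) = 0"
proof (induction N arbitrary: c s)
  case 0 then show ?case by simp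
next
  case (Suc N)
  show ?case
  proof (cases s)
    case 0 then show ?thesis by (simp only: pascal_alt) simp
  next
    case (Suc s')
    have d: "pochhammer (real k + c) (Suc s') - pochhammer (real (Suc k) + c) (Suc s')
        = - real (Suc s') * pochhammer (real k + (c + 1)) s'" for k
    proof -
      have "pochhammer (real k + c) (Suc s') = (real k + c) * pochhammer (real k + c + 1) s'"
        by (rule pochhammer_rec)
      moreover have "pochhammer (real (Suc k) + c) (Suc s') = pochhammer (real k + c + 1) s' * (real k + c + 1 + real s')"
        by (simp add: pochhammer_Suc add_ac)
      ultimately show ?thesis by (simp add: algebra_simps)
    qed
    have "s' < N" using Suc.prems Suc by simp
    have "(\<Sum>k\<le>Suc N. (-1)^k * real (Suc N choose k) * pochhammer (real k + c) s)
        = (\<Sum>k\<le>N. (-1)^k * real (N choose k) * (- real (Suc s') * pochhammer (real k + (c + 1)) s'))"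
      unfolding pascal_alt Suc d by simp
    also have "\<dots> = - real (Suc s') * (\<Sum>k\<le>N. (-1)^k * real (N choose k) * pochhammer (real k + (c + 1)) s')"
      by (simp add: sum_distrib_left mult_ac)
    also have "\<dots> = 0" using Suc.IH[OF \<open>s' < N\<close>] by simp
    finally show ?thesis .
  qed
qed

lemma G_shift: "M (2*(k+t)) = M (2*k) * pochhammer (real k + 1/2) t"
proof (induction t)
  case 0 then show ?case by simp
next
  case (Suc t)
  have "M (2*(k + Suc t)) = M (2*(k+t) + 2)" by simp
  also have "\<dots> = (real (2*(k+t)) + 1)/2 * M (2*(k+t))" by (rule M_rec)
  also have "\<dots> = M (2*k) * pochhammer (real k + 1/2) (Suc t)"
    unfolding Suc pochhammer_Suc by (simp add: field_simps)
  finally show ?case .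
qed

lemma lag_sum:
  assumes "s < N"
  shows "(\<Sum>k\<le>N. (-1)^k * ((real N + (real b - 1/2)) gchoose (N-k)) / fact k * M (2*(k+b+s))) = 0"
proof -
  have t: "(-1)^k * ((real N + (real b - 1/2)) gchoose (N-k)) / fact k * M (2*(k+b+s))
     = M (2*(N+b)) / fact N * ((-1)^k * real (N choose k) * pochhammer (real k + (real b + 1/2)) s)"
    if k: "k \<le> N" for k
  proof -
    have g: "(real N + (real b - 1/2)) gchoose (N-k) = pochhammer (real (k+b) + 1/2) (N-k) / fact (N-k)"
      unfolding gbinomial_pochhammer' using k by (simp add: of_nat_diff algebra_simps)
    have m1: "M (2*(k+b+s)) = M (2*(k+b)) * pochhammer (real (k+b) + 1/2) s"
      by (rule G_shift)
    have m2: "M (2*(k+b)) * pochhammer (real (k+b) + 1/2) (N-k) = M (2*(N+b))"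
    proof -
      have e: "2 * (k + b + (N - k)) = 2*(N+b)" using k by simp
      show ?thesis using G_shift[of "k+b" "N-k"] unfolding e by simp
    qed
    have bc: "real (N choose k) = fact N / (fact k * fact (N-k))"
      using binomial_fact[OF k] by simp
    have "(-1)^k * ((real N + (real b - 1/2)) gchoose (N-k)) / fact k * M (2*(k+b+s))
       = (-1)^k / (fact k * fact (N-k)) * (M (2*(k+b)) * pochhammer (real (k+b) + 1/2) (N-k))
           * pochhammer (real (k+b) + 1/2) s"
      unfolding g m1 by (simp add: field_simps)
    also have "\<dots> = (-1)^k / (fact k * fact (N-k)) * M (2*(N+b)) * pochhammer (real k + (real b + 1/2)) s"
      unfolding m2 by (simp add: add_ac)
    also have "\<dots> = M (2*(N+b)) / fact N * ((-1)^k * real (N choose k) * pochhammer (real k + (real b + 1/2)) s)"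
      unfolding bc by (simp add: field_simps)
    finally show ?thesis .
  qed
  have "(\<Sum>k\<le>N. (-1)^k * ((real N + (real b - 1/2)) gchoose (N-k)) / fact k * M (2*(k+b+s)))
     = (\<Sum>k\<le>N. M (2*(N+b)) / fact N * ((-1)^k * real (N choose k) * pochhammer (real k + (real b + 1/2)) s))"
    by (rule sum.cong) (rule refl, rule t, simp)
  also have "\<dots> = M (2*(N+b)) / fact N * (\<Sum>k\<le>N. (-1)^k * real (N choose k) * pochhammer (real k + (real b + 1/2)) s)"
    by (simp add: sum_distrib_left)
  also have "\<dots> = 0" using alt_poch[OF assms] by simp
  finally show ?thesis .
qed



definition lc :: "nat \<Rightarrow> real \<Rightarrow> nat \<Rightarrow> real" where
  "lc N a k = (-1)^k * ((real N + a) gchoose (N-k)) / fact k"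

lemma lag_expand:
  "x^e * laguerre N a (x^2) * x^i * exp (- (x^2))
     = (\<Sum>k\<le>N. lc N a k * (exp (- (x^2)) * x^(2*k+e+i)))"
proof -
  have "x^e * laguerre N a (x^2) * x^i * exp (- (x^2))
     = (\<Sum>k\<le>N. lc N a k * (x^2)^k * (x^e * x^i * exp (- (x^2))))"
    unfolding laguerre_def lc_def by (simp add: sum_distrib_left sum_distrib_right mult_ac)
  also have "\<dots> = (\<Sum>k\<le>N. lc N a k * (exp (- (x^2)) * x^(2*k+e+i)))"
  proof (rule sum.cong)
    fix k assume "k \<in> {..N}"
    have "x^(2*k+e+i) = (x^2)^k * x^e * x^i" by (simp add: power_add power_mult)
    then show "lc N a k * (x^2)^k * (x^e * x^i * exp (- (x^2))) = lc N a k * (exp (- (x^2)) * x^(2*k+e+i))"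
      by (simp add: mult_ac)
  qed simp
  finally show ?thesis .
qed

lemma lag_int: "integrable lborel (\<lambda>x. x^e * laguerre N a (x^2) * x^i * exp (- (x^2)))"
  unfolding lag_expand
  using mom_int by (auto intro!: Bochner_Integration.integrable_sum integrable_mult_right)

lemma lag_integral: "(LINT x|lborel. x^e * laguerre N a (x^2) * x^i * exp (- (x^2)))
    = (\<Sum>k\<le>N. lc N a k * M (2*k+e+i))"
  unfolding lag_expand M_def
  by (subst Bochner_Integration.integral_sum) (use mom_int in auto)

lemma lag_orth_even:
  assumes "1 \<le> i" "i < 2*N+2"
  shows "(LINT x|lborel. x^2 * laguerre N (3/2) (x^2) * x^i * exp (- (x^2))) = 0"
proof (cases "even i")
  case True
  then obtain j where j: "i = 2*j" by auto
  define s where "s = j - 1"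
  have s: "s < N" "i = 2*(s+1)" using assms j unfolding s_def by auto
  have "(\<Sum>k\<le>N. lc N (3/2) k * M (2*k+2+i)) =
        (\<Sum>k\<le>N. (-1)^k * ((real N + (real (2::nat) - 1/2)) gchoose (N-k)) / fact k * M (2*(k+2+s)))"
    by (rule sum.cong) (simp_all add: lc_def s(2) algebra_simps)
  also have "\<dots> = 0" by (rule lag_sum[OF s(1)])
  finally show ?thesis by (simp add: lag_integral)
next
  case False
  then show ?thesis by (simp add: lag_integral M_odd)
qed

lemma lag_orth_odd:
  assumes "1 \<le> i" "i < 2*N+1"
  shows "(LINT x|lborel. x^1 * laguerre N (1/2) (x^2) * x^i * exp (- (x^2))) = 0"
proof (cases "even i")
  case False
  then obtain j where j: "i = 2*j+1" using oddE by blast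
  have s: "j < N" using assms j by auto
  have "(\<Sum>k\<le>N. lc N (1/2) k * M (2*k+1+i)) =
        (\<Sum>k\<le>N. (-1)^k * ((real N + (real (1::nat) - 1/2)) gchoose (N-k)) / fact k * M (2*(k+1+j)))"
    by (rule sum.cong) (simp_all add: lc_def j algebra_simps)
  also have "\<dots> = 0" by (rule lag_sum[OF s])
  finally show ?thesis unfolding lag_integral .
next
  case True
  then show ?thesis by (simp only: lag_integral) (simp add: M_odd)
qed

definition lagP :: "nat \<Rightarrow> real \<Rightarrow> nat \<Rightarrow> real poly" where
  "lagP e a N = (\<Sum>k\<le>N. monom (lc N a k) (2*k+e))"

lemma poly_lagP: "poly (lagP e a N) x = x^e * laguerre N a (x^2)"
proof -
  have "poly (lagP e a N) x = (\<Sum>k\<le>N. lc N a k * x^(2*k+e))"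
    unfolding lagP_def poly_sum poly_monom ..
  also have "\<dots> = (\<Sum>k\<le>N. x^e * ((-1)^k * ((real N + a) gchoose (N-k)) * (x^2)^k / fact k))"
  proof (rule sum.cong)
    fix k assume "k \<in> {..N}"
    have "x^(2*k+e) = (x^2)^k * x^e" by (simp add: power_add power_mult)
    then show "lc N a k * x^(2*k+e) = x^e * ((-1)^k * ((real N + a) gchoose (N-k)) * (x^2)^k / fact k)"
      by (simp add: lc_def mult_ac)
  qed simp
  also have "\<dots> = x^e * laguerre N a (x^2)"
    unfolding laguerre_def by (simp add: sum_distrib_left)
  finally show ?thesis .
qed

lemma degree_lagP: "degree (lagP e a N) \<le> 2*N+e"
  unfolding lagP_def
  by (rule degree_sum_le) (auto intro: order.trans[OF degree_monom_le])

lemma coeff_lagP: "coeff (lagP e a N) (2*N+e) \<noteq> 0"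
proof -
  have "coeff (lagP e a N) (2*N+e) = (\<Sum>k\<le>N. if k = N then lc N a k else 0)"
    unfolding lagP_def coeff_sum coeff_monom by (rule sum.cong) auto
  also have "\<dots> = lc N a N" by simp
  finally show ?thesis by (simp add: lc_def)
qed



lemma Hp_deg: "degree (Hp n) \<le> n \<and> coeff (Hp n) n = 2^n"
proof (induction n rule: Hp.induct)
  case 1 then show ?case by simp
next
  case 2 then show ?case by simp
next
  case (3 n)
  have d1: "degree (smult 2 (pCons 0 (Hp (Suc n)))) \<le> Suc (Suc n)"
    using 3 by (metis Suc_le_mono degree_pCons_le degree_smult_le order.trans)
  have d2: "degree (smult (2 * real (Suc n)) (Hp n)) \<le> Suc (Suc n)"
    using 3 by (meson degree_smult_le le_SucI order.trans)
  have "degree (Hp (Suc (Suc n))) \<le> Suc (Suc n)"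
    using degree_diff_le[OF d1 d2] by simp
  moreover have "coeff (Hp n) (Suc (Suc n)) = 0"
    using 3 by (intro coeff_eq_0) simp
  ultimately show ?case using 3 by simp
qed

lemma tri_eq: "{(i,j). i+j \<le> (m::nat)} = Sigma {..m} (\<lambda>i. {..m-i})" by auto
lemma tri_lt: "{(i,j). i+j < (m::nat)} = Sigma {..<m} (\<lambda>i. {..<m-i})" by auto

lemma sum_tri:
  fixes a b :: "nat \<Rightarrow> real"
  shows "(\<Sum>(i,j)\<in>{(i,j). i+j \<le> m}. ((if j=0 then a i else 0) + (if i=0 then b j else 0)) * x^i * y^j)
     = (\<Sum>i\<le>m. a i * x^i) + (\<Sum>j\<le>m. b j * y^j)"
proof -
  have "(\<Sum>(i,j)\<in>{(i,j). i+j \<le> m}. ((if j=0 then a i else 0) + (if i=0 then b j else 0)) * x^i * y^j)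
     = (\<Sum>i\<le>m. \<Sum>j\<le>m-i. ((if j=0 then a i else 0) + (if i=0 then b j else 0)) * x^i * y^j)"
    unfolding tri_eq by (subst sum.Sigma) auto
  also have "\<dots> = (\<Sum>i\<le>m. a i * x^i + (if i = 0 then (\<Sum>j\<le>m. b j * y^j) else 0))"
  proof (rule sum.cong)
    fix i assume "i \<in> {..m}"
    have "(\<Sum>j\<le>m-i. ((if j=0 then a i else 0) + (if i=0 then b j else 0)) * x^i * y^j)
       = (\<Sum>j\<le>m-i. (if j=0 then a i * x^i else 0)) + (\<Sum>j\<le>m-i. (if i=0 then b j * y^j else 0))"
      by (subst sum.distrib[symmetric]) (rule sum.cong, auto)
    also have "\<dots> = a i * x^i + (if i = 0 then (\<Sum>j\<le>m. b j * y^j) else 0)"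
      by (simp add: sum.delta)
    finally show "(\<Sum>j\<le>m-i. ((if j=0 then a i else 0) + (if i=0 then b j else 0)) * x^i * y^j)
       = a i * x^i + (if i = 0 then (\<Sum>j\<le>m. b j * y^j) else 0)" .
  qed simp
  also have "\<dots> = (\<Sum>i\<le>m. a i * x^i) + (\<Sum>j\<le>m. b j * y^j)"
    by (simp add: sum.distrib sum.delta)
  finally show ?thesis .
qed

lemma sum_x0:
  fixes c :: "nat \<Rightarrow> nat \<Rightarrow> real"
  shows "(\<Sum>(i,j)\<in>{(i,j). i+j < m}. c i j * x^i * 0^j) = (\<Sum>i<m. c i 0 * x^i)"
proof -
  have "(\<Sum>(i,j)\<in>{(i,j). i+j < m}. c i j * x^i * 0^j) = (\<Sum>i<m. \<Sum>j<m-i. c i j * x^i * 0^j)"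
    unfolding tri_lt by (subst sum.Sigma) auto
  also have "\<dots> = (\<Sum>i<m. c i 0 * x^i)"
  proof (rule sum.cong)
    fix i assume i: "i \<in> {..<m}"
    have "(\<Sum>j<m-i. c i j * x^i * 0^j) = (\<Sum>j<m-i. if j = 0 then c i 0 * x^i else 0)"
      by (rule sum.cong) (auto simp: power_0_left)
    also have "\<dots> = c i 0 * x^i" using i by (simp add: sum.delta)
    finally show "(\<Sum>j<m-i. c i j * x^i * 0^j) = c i 0 * x^i" .
  qed simp
  finally show ?thesis .
qed

lemma sum_0y:
  fixes c :: "nat \<Rightarrow> nat \<Rightarrow> real"
  assumes "0 < m"
  shows "(\<Sum>(i,j)\<in>{(i,j). i+j < m}. c i j * 0^i * y^j) = (\<Sum>j<m. c 0 j * y^j)"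
proof -
  have "(\<Sum>(i,j)\<in>{(i,j). i+j < m}. c i j * 0^i * y^j) = (\<Sum>i<m. \<Sum>j<m-i. c i j * 0^i * y^j)"
    unfolding tri_lt by (subst sum.Sigma) auto
  also have "\<dots> = (\<Sum>i<m. if i = 0 then (\<Sum>j<m. c 0 j * y^j) else 0)"
    by (rule sum.cong) (auto simp: power_0_left)
  also have "\<dots> = (\<Sum>j<m. c 0 j * y^j)" using assms by (simp add: sum.delta)
  finally show ?thesis .
qed

lemma bipoly_gen:
  assumes "degree P \<le> m" "degree Q \<le> m" "coeff P m \<noteq> 0" "m \<ge> 1"
    and f: "\<And>x y. f x y = poly P x + poly Q y"
  shows "bipoly_of_degree m f"
  unfolding bipoly_of_degree_def
proof (intro exI[of _ "\<lambda>i j. (if j=0 then coeff P i else 0) + (if i=0 then coeff Q j else 0)"] conjI allI)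
  fix x y
  show "f x y = (\<Sum>(i,j)\<in>{(i,j). i+j \<le> m}. ((if j=0 then coeff P i else 0) + (if i=0 then coeff Q j else 0)) * x^i * y^j)"
    unfolding sum_tri f using assms(1,2) by (simp add: poly_sum_le)
next
  show "\<exists>i j. i + j = m \<and> (if j=0 then coeff P i else 0) + (if i=0 then coeff Q j else 0) \<noteq> 0"
    using assms(3,4) by (intro exI[of _ m] exI[of _ 0]) simp
qed

lemma lint_sum:
  fixes g :: "real \<Rightarrow> real" and c :: "nat \<Rightarrow> real"
  assumes int: "\<And>i. integrable lborel (\<lambda>x. g x * x^i * exp (- (x^2)))"
  shows "(LINT x|lborel. g x * (\<Sum>i<m. c i * x^i) * exp (- (x^2)))
       = (\<Sum>i<m. c i * (LINT x|lborel. g x * x^i * exp (- (x^2))))"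
proof -
  have "(LINT x|lborel. g x * (\<Sum>i<m. c i * x^i) * exp (- (x^2)))
      = (LINT x|lborel. (\<Sum>i<m. c i * (g x * x^i * exp (- (x^2)))))"
    by (intro Bochner_Integration.integral_cong refl) (simp add: sum_distrib_left sum_distrib_right, rule sum.cong, simp_all add: mult_ac)
  also have "\<dots> = (\<Sum>i<m. (LINT x|lborel. c i * (g x * x^i * exp (- (x^2)))))"
    by (rule Bochner_Integration.integral_sum) (use int in auto)
  also have "\<dots> = (\<Sum>i<m. c i * (LINT x|lborel. g x * x^i * exp (- (x^2))))" by simp
  finally show ?thesis .
qed



theorem proposition6p3:
  fixes m :: nat
  assumes "m \<ge> 1"
  shows "bipoly_of_degree m (Y1 m) \<and> bipoly_of_degree m (Y2 m)
    \<and> (\<forall>c :: nat \<Rightarrow> nat \<Rightarrow> real.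
          axes_ip (Y1 m) (\<lambda>x y. \<Sum>(i,j)\<in>{(i,j). i + j < m}. c i j * x^i * y^j) = 0
        \<and> axes_ip (Y2 m) (\<lambda>x y. \<Sum>(i,j)\<in>{(i,j). i + j < m}. c i j * x^i * y^j) = 0)
    \<and> axes_ip (Y1 m) (Y2 m) = 0"
proof -
  have m0: "0 < m" using assms by simp
  obtain e N a where mN: "m = 2*N+e" and e1: "1 \<le> e"
    and Y2x: "\<And>x. Y2 m x 0 = x^e * laguerre N a (x^2)"
    and Y2y: "\<And>y. Y2 m 0 y = - (y^e * laguerre N a (y^2))"
    and Y2xy: "\<And>x y. Y2 m x y = x^e * laguerre N a (x^2) - y^e * laguerre N a (y^2)"
    and orth: "\<And>i. 1 \<le> i \<Longrightarrow> i < m \<Longrightarrow>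
        (LINT x|lborel. x^e * laguerre N a (x^2) * x^i * exp (- (x^2))) = 0"
  proof (cases "even m")
    case True
    then obtain n where n: "m = 2*n" by auto
    with m0 have n1: "n \<ge> 1" by simp
    show ?thesis
    proof (rule that[of "n-1" 2 "3/2"])
      show "m = 2*(n-1)+2" using n n1 by simp
      show "1 \<le> (2::nat)" by simp
    next
      fix x show "Y2 m x 0 = x^2 * laguerre (n-1) (3/2) (x^2)" using True n by (simp add: Y2_def)
    next
      fix y show "Y2 m 0 y = - (y^2 * laguerre (n-1) (3/2) (y^2))" using True n by (simp add: Y2_def)
    next
      fix x y show "Y2 m x y = x^2 * laguerre (n-1) (3/2) (x^2) - y^2 * laguerre (n-1) (3/2) (y^2)"
        using True n by (simp add: Y2_def)
    next
      fix i assume "1 \<le> i" "i < m"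
      then show "(LINT x|lborel. x^2 * laguerre (n-1) (3/2) (x^2) * x^i * exp (- (x^2))) = 0"
        using lag_orth_even[of i "n-1"] n n1 by simp
    qed
  next
    case False
    then obtain n where n: "m = 2*n+1" using oddE by blast
    show ?thesis
    proof (rule that[of n 1 "1/2"])
      show "m = 2*n+1" using n by simp
      show "1 \<le> (1::nat)" by simp
    next
      fix x show "Y2 m x 0 = x^1 * laguerre n (1/2) (x^2)" using False n by (simp add: Y2_def)
    next
      fix y show "Y2 m 0 y = - (y^1 * laguerre n (1/2) (y^2))" using False n by (simp add: Y2_def)
    next
      fix x y show "Y2 m x y = x^1 * laguerre n (1/2) (x^2) - y^1 * laguerre n (1/2) (y^2)"
        using False n by (simp add: Y2_def)
    next
      fix i assume "1 \<le> i" "i < m"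
      then show "(LINT x|lborel. x^1 * laguerre n (1/2) (x^2) * x^i * exp (- (x^2))) = 0"
        using lag_orth_odd[of i n] n by simp
    qed
  qed
  define f where "f x = x^e * laguerre N a (x^2)" for x :: real
  note Y2x = Y2x[folded f_def] and Y2y = Y2y[folded f_def] and Y2xy = Y2xy[folded f_def]
  have orth': "(LINT x|lborel. f x * x^i * exp (- (x^2))) = 0" if "1 \<le> i" "i < m" for i
    unfolding f_def using orth that .
  have fint: "integrable lborel (\<lambda>x. f x * x^i * exp (- (x^2)))" for i
    unfolding f_def by (rule lag_int)
  have Y1x: "Y1 m x 0 = hermite m x" for x by (simp add: Y1_def)
  have Y1y: "Y1 m 0 y = hermite m y" for y by (simp add: Y1_def)

  have B1: "bipoly_of_degree m (Y1 m)"
  proof (rule bipoly_gen[of "Hp m" m "Hp m - [:hermite m 0:]"])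
    show "degree (Hp m) \<le> m" using Hp_deg[of m] by simp
    show "degree (Hp m - [:hermite m 0:]) \<le> m"
      by (rule degree_diff_le) (use Hp_deg[of m] in simp_all)
    show "coeff (Hp m) m \<noteq> 0" using Hp_deg[of m] by simp
    show "m \<ge> 1" by fact
    fix x y show "Y1 m x y = poly (Hp m) x + poly (Hp m - [:hermite m 0:]) y"
      by (simp add: Y1_def poly_Hp)
  qed
  have B2: "bipoly_of_degree m (Y2 m)"
  proof (rule bipoly_gen[of "lagP e a N" m "- lagP e a N"])
    show "degree (lagP e a N) \<le> m" using degree_lagP[of e a N] mN by simp
    then show "degree (- lagP e a N) \<le> m" by simp
    show "coeff (lagP e a N) m \<noteq> 0" using coeff_lagP[of e a N] mN by simp
    show "m \<ge> 1" by fact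
    fix x y show "Y2 m x y = poly (lagP e a N) x + poly (- lagP e a N) y"
      by (simp add: Y2xy poly_lagP f_def)
  qed

  have ax: "axes_ip F (\<lambda>x y. \<Sum>(i,j)\<in>{(i,j). i + j < m}. c i j * x^i * y^j)
      = (LINT x|lborel. F x 0 * (\<Sum>i<m. c i 0 * x^i) * exp (- (x^2)))
      + (LINT y|lborel. F 0 y * (\<Sum>j<m. c 0 j * y^j) * exp (- (y^2)))" for F c
    unfolding axes_ip_def by (simp add: sum_x0 sum_0y[OF m0])

  have O1: "axes_ip (Y1 m) (\<lambda>x y. \<Sum>(i,j)\<in>{(i,j). i + j < m}. c i j * x^i * y^j) = 0" for c
  proof -
    have z: "(\<Sum>i<m. d i * (LINT x|lborel. hermite m x * x^i * exp (- (x^2)))) = 0" for d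
      by (rule sum.neutral) (simp add: hermite_orth)
    show ?thesis unfolding ax Y1x Y1y
      by (simp only: lint_sum[OF hermite_int] z)
  qed

  have O2: "axes_ip (Y2 m) (\<lambda>x y. \<Sum>(i,j)\<in>{(i,j). i + j < m}. c i j * x^i * y^j) = 0" for c
  proof -
    let ?I = "\<lambda>i. (LINT x|lborel. f x * x^i * exp (- (x^2)))"
    have s: "(\<Sum>i<m. d i * ?I i) = d 0 * ?I 0" for d
    proof -
      have "(\<Sum>i<m. d i * ?I i) = (\<Sum>i<m. if i = 0 then d 0 * ?I 0 else 0)"
        by (rule sum.cong) (auto simp: orth')
      also have "\<dots> = d 0 * ?I 0" using m0 by simp
      finally show ?thesis .
    qed
    have nint: "integrable lborel (\<lambda>x. - f x * x^i * exp (- (x^2)))" for i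
      using integrable_minus[OF fint[of i]] by simp
    have nI: "(LINT x|lborel. - f x * x^i * exp (- (x^2))) = - ?I i" for i
      using integral_minus[of lborel "\<lambda>x. f x * x^i * exp (- (x^2))"] by simp
    have "axes_ip (Y2 m) (\<lambda>x y. \<Sum>(i,j)\<in>{(i,j). i + j < m}. c i j * x^i * y^j)
       = (\<Sum>i<m. c i 0 * ?I i) + (\<Sum>j<m. c 0 j * (LINT x|lborel. - f x * x^j * exp (- (x^2))))"
      unfolding ax Y2x Y2y
      by (simp only: lint_sum[OF fint] lint_sum[of "\<lambda>x. - f x", OF nint])
    also have "\<dots> = (\<Sum>i<m. c i 0 * ?I i) + (\<Sum>j<m. (- c 0 j) * ?I j)"
      unfolding nI by simp
    also have "\<dots> = 0" unfolding s by simp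
    finally show ?thesis .
  qed

  have O3: "axes_ip (Y1 m) (Y2 m) = 0"
  proof -
    have "(\<lambda>y. Y1 m 0 y * Y2 m 0 y * exp (- (y^2))) = (\<lambda>y. - (hermite m y * f y * exp (- (y^2))))"
      by (simp add: Y1y Y2y fun_eq_iff)
    moreover have "(\<lambda>x. Y1 m x 0 * Y2 m x 0 * exp (- (x^2))) = (\<lambda>x. hermite m x * f x * exp (- (x^2)))"
      by (simp add: Y1x Y2x fun_eq_iff)
    ultimately show ?thesis unfolding axes_ip_def by (simp only: integral_minus)
  qed
  show ?thesis using B1 B2 O1 O2 O3 by blast
qed

end
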